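(* Suppose $\min\{d_1,\dots,d_{L-1}\}\ge d_{\min}$, and: if $L=2$, $\lambda\ne y_i^2$ for all $i\in[r_Y]$; if $L\ge3$, $\lambda\ne y_i^{2(L-1)}\big((\tfrac{L-2}{L})^{\frac{L}{2(L-1)}}+(\tfrac{L}{L-2})^{\frac{L-2}{2(L-1)}}\big)^{-2(L-1)}$ for all $i\in[r_Y]$. Let $\mu:=\min\{\min_{i\in[r_Y]}|\lambda-y_i^2|,\ \lambda\}$ and $$(\epsilon_0,\kappa_0)=\begin{cases}\Big(\big(\tfrac{\sqrt\lambda\,\mu}{2(\sqrt\lambda+y_1)}\big)^{1/2},\ \tfrac{2(\sqrt\lambda+y_1)}{\sqrt\lambda\,\mu}\Big),&L=2,\\[1ex] \Big(\min\big\{(\lambda/3)^{1/(2L-2)},\ (\sqrt\lambda/(3y_1))^{1/(L-2)}\big\},\ \tfrac{3\sqrt L}{2\lambda}\Big),&L\ge3.\end{cases}$$ Then for all $\bm W=(\bm W_1,\dots,\bm W_L)$ with $(\sum_l\|\bm W_l\|_F^2)^{1/2}\le\epsilon_0$, $$\Big(\sum_{l=1}^L\|\bm W_l\|_F^2\Big)^{1/2}\le\kappa_0\|\nabla G(\bm W)\|_F.$$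
   Context: Let $L\ge2$, $d_0,\dots,d_L$ positive integers, $d_{\min}=\min\{d_0,d_L\}$, $\lambda>0$, $y_1\ge\dots\ge y_{d_{\min}}\ge0$, $r_Y$ the number of positive $y_i$, and $\bm Y\in\mathbb R^{d_L\times d_0}$ the matrix with $(i,i)$ entry $y_i$ for $i\le d_{\min}$ and zeros elsewhere. For $\bm W=(\bm W_1,\dots,\bm W_L)$, $\bm W_l\in\mathbb R^{d_l\times d_{l-1}}$, $G(\bm W)=\|\bm W_L\cdots\bm W_1-\sqrt\lambda\bm Y\|_F^2+\lambda\sum_l\|\bm W_l\|_F^2$, and $\|\nabla G(\bm W)\|_F=(\sum_l\|\nabla_{\bm W_l}G(\bm W)\|_F^2)^{1/2}$. (If $y_1=0$ and $L\ge3$, the second term in the minimum defining $\epsilon_0$ is interpreted as $+\infty$.) *)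

theory Defs
  imports "HOL-Analysis.Analysis"
begin

text \<open>Matrices of varying sizes are represented as functions nat => nat => real,
  only entries (i,j) with i < rows, j < cols being meaningful (0-indexed).
  A tuple W = (W_1,...,W_L) is a function nat => (nat => nat => real), W l being
  the d l x d (l-1) matrix W_l.  Singular values y are 1-indexed: y 1 >= y 2 >= ...\<close>

type_synonym mat = "nat \<Rightarrow> nat \<Rightarrow> real"

fun chainW :: "(nat \<Rightarrow> nat) \<Rightarrow> (nat \<Rightarrow> mat) \<Rightarrow> nat \<Rightarrow> mat" where
  "chainW d W 0 = (\<lambda>i j. if i = j then 1 else 0)"
| "chainW d W (Suc k) = (\<lambda>i j. \<Sum>m<d k. W (Suc k) i m * chainW d W k m j)"

definition dmin :: "(nat \<Rightarrow> nat) \<Rightarrow> nat \<Rightarrow> nat" where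
  "dmin d L = min (d 0) (d L)"

definition Ymat :: "(nat \<Rightarrow> nat) \<Rightarrow> nat \<Rightarrow> (nat \<Rightarrow> real) \<Rightarrow> mat" where
  "Ymat d L y = (\<lambda>i j. if i = j \<and> i < dmin d L then y (Suc i) else 0)"

definition rY :: "(nat \<Rightarrow> nat) \<Rightarrow> nat \<Rightarrow> (nat \<Rightarrow> real) \<Rightarrow> nat" where
  "rY d L y = card {i \<in> {1..dmin d L}. y i > 0}"

definition sqnormW :: "(nat \<Rightarrow> nat) \<Rightarrow> nat \<Rightarrow> (nat \<Rightarrow> mat) \<Rightarrow> real" where
  "sqnormW d L W = (\<Sum>l\<in>{1..L}. \<Sum>i<d l. \<Sum>j<d (l - 1). (W l i j)\<^sup>2)"

definition Gfun :: "(nat \<Rightarrow> nat) \<Rightarrow> nat \<Rightarrow> real \<Rightarrow> (nat \<Rightarrow> real) \<Rightarrow> (nat \<Rightarrow> mat) \<Rightarrow> real" where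
  "Gfun d L lam y W =
     (\<Sum>i<d L. \<Sum>j<d 0. (chainW d W L i j - sqrt lam * Ymat d L y i j)\<^sup>2)
     + lam * sqnormW d L W"

definition perturbW :: "(nat \<Rightarrow> mat) \<Rightarrow> nat \<Rightarrow> nat \<Rightarrow> nat \<Rightarrow> real \<Rightarrow> (nat \<Rightarrow> mat)" where
  "perturbW W l i j t = W(l := (W l)(i := (W l i)(j := W l i j + t)))"

definition gradG :: "(nat \<Rightarrow> nat) \<Rightarrow> nat \<Rightarrow> real \<Rightarrow> (nat \<Rightarrow> real) \<Rightarrow> (nat \<Rightarrow> mat) \<Rightarrow> nat \<Rightarrow> mat" where
  "gradG d L lam y W l i j = deriv (\<lambda>t. Gfun d L lam y (perturbW W l i j t)) 0"

definition gradnormG :: "(nat \<Rightarrow> nat) \<Rightarrow> nat \<Rightarrow> real \<Rightarrow> (nat \<Rightarrow> real) \<Rightarrow> (nat \<Rightarrow> mat) \<Rightarrow> real" where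
  "gradnormG d L lam y W =
     sqrt (\<Sum>l\<in>{1..L}. \<Sum>i<d l. \<Sum>j<d (l - 1). (gradG d L lam y W l i j)\<^sup>2)"

text \<open>mu = min { min_{i in [r_Y]} |lam - y_i^2|, lam }; the inner min over the empty set is +infinity.\<close>
definition muval :: "(nat \<Rightarrow> nat) \<Rightarrow> nat \<Rightarrow> real \<Rightarrow> (nat \<Rightarrow> real) \<Rightarrow> real" where
  "muval d L lam y =
     (if rY d L y = 0 then lam
      else min (Min ((\<lambda>i. \<bar>lam - (y i)\<^sup>2\<bar>) ` {1..rY d L y})) lam)"

definition eps0 :: "(nat \<Rightarrow> nat) \<Rightarrow> nat \<Rightarrow> real \<Rightarrow> (nat \<Rightarrow> real) \<Rightarrow> real" where
  "eps0 d L lam y =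
     (if L = 2 then
        sqrt (sqrt lam * muval d L lam y / (2 * (sqrt lam + y 1)))
      else if y 1 = 0 then (lam / 3) powr (1 / (2 * real L - 2))
      else min ((lam / 3) powr (1 / (2 * real L - 2)))
               ((sqrt lam / (3 * y 1)) powr (1 / (real L - 2))))"

definition kappa0 :: "(nat \<Rightarrow> nat) \<Rightarrow> nat \<Rightarrow> real \<Rightarrow> (nat \<Rightarrow> real) \<Rightarrow> real" where
  "kappa0 d L lam y =
     (if L = 2 then 2 * (sqrt lam + y 1) / (sqrt lam * muval d L lam y)
      else 3 * sqrt (real L) / (2 * lam))"

text \<open>Excluded value of lam for L >= 3.\<close>
definition crit :: "nat \<Rightarrow> real \<Rightarrow> real" where
  "crit L yi = yi ^ (2 * (L - 1)) *
     (((real L - 2) / real L) powr (real L / (2 * (real L - 1)))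
      + (real L / (real L - 2)) powr ((real L - 2) / (2 * (real L - 1)))) powr (- (2 * (real L - 1)))"

end

theory Submission
  imports Defs
begin


lemma perturbW_eq: "perturbW W l i j t l' m p = W l' m p + (if l' = l \<and> m = i \<and> p = j then t else 0)"
  by (simp add: perturbW_def)

lemma perturbW_eq2: "perturbW W l i j t l' m p = W l' m p + t * (if l' = l \<and> m = i \<and> p = j then 1 else 0)"
  by (simp add: perturbW_def)

fun Dm :: "(nat \<Rightarrow> nat) \<Rightarrow> (nat \<Rightarrow> mat) \<Rightarrow> nat \<Rightarrow> nat \<Rightarrow> nat \<Rightarrow> nat \<Rightarrow> mat" where
  "Dm d W l i j 0 = (\<lambda>m n. 0)"
| "Dm d W l i j (Suc k) = (\<lambda>m n. (if Suc k = l \<and> m = i \<and> j < d k then chainW d W k j n else 0)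
      + (\<Sum>p<d k. W (Suc k) m p * Dm d W l i j k p n))"

lemma Dm_below: "k < l \<Longrightarrow> Dm d W l i j k m n = 0"
  by (induction k arbitrary: m n) auto

lemma chain_perturb: "chainW d (perturbW W l i j t) k m n = chainW d W k m n + t * Dm d W l i j k m n"
proof (induction k arbitrary: m n)
  case 0 show ?case by simp
next
  case (Suc k)
  have "chainW d (perturbW W l i j t) (Suc k) m n = (\<Sum>p<d k. (W (Suc k) m p + (if Suc k = l \<and> m = i \<and> p = j then t else 0)) * (chainW d W k p n + t * Dm d W l i j k p n))"
    by (simp add: Suc.IH perturbW_eq)
  also have "\<dots> = (\<Sum>p<d k. W (Suc k) m p * chainW d W k p n) + t * (\<Sum>p<d k. W (Suc k) m p * Dm d W l i j k p n) + (\<Sum>p<d k. (if Suc k = l \<and> m = i \<and> p = j then t else 0) * (chainW d W k p n + t * Dm d W l i j k p n))"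
    by (simp add: algebra_simps sum.distrib sum_distrib_left)
  also have "(\<Sum>p<d k. (if Suc k = l \<and> m = i \<and> p = j then t else 0) * (chainW d W k p n + t * Dm d W l i j k p n)) = (if Suc k = l \<and> m = i \<and> j < d k then t * chainW d W k j n else 0)"
  proof -
    have "(\<Sum>p<d k. (if Suc k = l \<and> m = i \<and> p = j then t else 0) * (chainW d W k p n + t * Dm d W l i j k p n))
      = (\<Sum>p<d k. if p = j then (if Suc k = l \<and> m = i then t * (chainW d W k p n + t * Dm d W l i j k p n) else 0) else 0)"
      by (rule sum.cong) auto
    also have "\<dots> = (if Suc k = l \<and> m = i \<and> j < d k then t * chainW d W k j n else 0)"
      using Dm_below[of k l d W i j j n] by (simp add: sum.delta)
    finally show ?thesis .
  qed
  finally show ?case by (simp add: algebra_simps)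
qed

lemma delta3:
  fixes d :: "nat \<Rightarrow> nat" and l :: nat
  assumes "finite A" "l \<in> A" "i < d l" "j < d (l-1)"
  shows "(\<Sum>l'\<in>A. \<Sum>m<d l'. \<Sum>p<d(l'-1). if l'=l \<and> m=i \<and> p=j then c else 0) = (c::real)"
proof -
  have "(\<Sum>l'\<in>A. \<Sum>m<d l'. \<Sum>p<d(l'-1). if l'=l \<and> m=i \<and> p=j then c else 0)
     = (\<Sum>l'\<in>A. if l' = l then (\<Sum>m<d l'. \<Sum>p<d(l'-1). if m=i \<and> p=j then c else 0) else 0)"
    by (rule sum.cong) auto
  also have "\<dots> = (\<Sum>m<d l. \<Sum>p<d(l-1). if m=i \<and> p=j then c else 0)" using assms by (simp add: sum.delta)
  also have "\<dots> = (\<Sum>m<d l. if m = i then (\<Sum>p<d(l-1). if p=j then c else 0) else 0)" by (rule sum.cong) auto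
  also have "\<dots> = (\<Sum>m<d l. if m = i then c else 0)"
  proof (rule sum.cong)
    fix x
    have "(\<Sum>p<d(l-1). if p=j then c else 0) = c"
      using assms by (subst sum.delta) auto
    then show "(if x = i then (\<Sum>p<d(l-1). if p=j then c else 0) else 0) = (if x = i then c else 0)" by simp
  qed simp
  also have "\<dots> = c" using assms by (subst sum.delta) auto
  finally show ?thesis .
qed

lemma sqnorm_perturb:
  assumes "l \<in> {1..L}" "i < d l" "j < d (l-1)"
  shows "sqnormW d L (perturbW W l i j t) = sqnormW d L W + (2*t*W l i j + t^2)"
proof -
  have e: "\<And>l' m p. (perturbW W l i j t l' m p)^2 = (W l' m p)^2 + (if l' = l \<and> m = i \<and> p = j then 2*t*W l i j + t^2 else 0)"
    by (auto simp: perturbW_eq power2_eq_square algebra_simps)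
  show ?thesis unfolding sqnormW_def e sum.distrib
    using delta3[of "{1..L}" l i d j "2*t*W l i j + t^2"] assms by simp
qed

lemma grad_formula:
  assumes "l \<in> {1..L}" "i < d l" "j < d (l-1)"
  shows "gradG d L lam y W l i j = 2*(\<Sum>m<d L. \<Sum>n<d 0. (chainW d W L m n - sqrt lam * Ymat d L y m n) * Dm d W l i j L m n) + 2*lam*W l i j"
proof -
  have "((\<lambda>t. Gfun d L lam y (perturbW W l i j t)) has_real_derivative
     (\<Sum>m<d L. \<Sum>n<d 0. 2 * ((chainW d W L m n - sqrt lam * Ymat d L y m n) * Dm d W l i j L m n))
     + lam * (2 * W l i j)) (at 0)"
    unfolding Gfun_def sqnorm_perturb[OF assms] chain_perturb
    by (auto intro!: derivative_eq_intros sum.cong simp: power2_eq_square algebra_simps)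
  then show ?thesis unfolding gradG_def
    by (simp add: DERIV_imp_deriv sum_distrib_left)
qed
lemma trip_swap:
  fixes d :: "nat \<Rightarrow> nat" and f :: "nat \<Rightarrow> nat \<Rightarrow> nat \<Rightarrow> 'b \<Rightarrow> real"
  shows "(\<Sum>l\<in>A. \<Sum>i<d l. \<Sum>j<d(l-1). \<Sum>p\<in>P. f l i j p) = (\<Sum>p\<in>P. \<Sum>l\<in>A. \<Sum>i<d l. \<Sum>j<d(l-1). f l i j p)"
proof -
  have "(\<Sum>l\<in>A. \<Sum>i<d l. \<Sum>j<d(l-1). \<Sum>p\<in>P. f l i j p) = (\<Sum>l\<in>A. \<Sum>i<d l. \<Sum>p\<in>P. \<Sum>j<d(l-1). f l i j p)"
    by (intro sum.cong refl sum.swap)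
  also have "\<dots> = (\<Sum>l\<in>A. \<Sum>p\<in>P. \<Sum>i<d l. \<Sum>j<d(l-1). f l i j p)"
    by (intro sum.cong refl sum.swap)
  also have "\<dots> = (\<Sum>p\<in>P. \<Sum>l\<in>A. \<Sum>i<d l. \<Sum>j<d(l-1). f l i j p)"
    by (rule sum.swap)
  finally show ?thesis .
qed

lemma euler:
  "m < d k \<Longrightarrow> (\<Sum>l\<in>{1..k}. \<Sum>i<d l. \<Sum>j<d(l-1). W l i j * Dm d W l i j k m n) = real k * chainW d W k m n"
proof (induction k arbitrary: m n)
  case 0
  then show ?case by simp
next
  case (Suc k)
  define F where "F l = (\<Sum>i<d l. \<Sum>j<d(l-1). W l i j * Dm d W l i j (Suc k) m n)" for l
  have "(\<Sum>l\<in>{1..Suc k}. F l) = (\<Sum>l\<in>{1..k}. F l) + F (Suc k)"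
    by (simp add: sum.cl_ivl_Suc)
  also have "(\<Sum>l\<in>{1..k}. F l) = (\<Sum>l\<in>{1..k}. \<Sum>i<d l. \<Sum>j<d(l-1). \<Sum>p<d k. W (Suc k) m p * (W l i j * Dm d W l i j k p n))"
    unfolding F_def by (intro sum.cong refl) (auto simp: sum_distrib_left algebra_simps)
  also have "\<dots> = (\<Sum>p<d k. \<Sum>l\<in>{1..k}. \<Sum>i<d l. \<Sum>j<d(l-1). W (Suc k) m p * (W l i j * Dm d W l i j k p n))"
    by (rule trip_swap)
  also have "\<dots> = (\<Sum>p<d k. W (Suc k) m p * (\<Sum>l\<in>{1..k}. \<Sum>i<d l. \<Sum>j<d(l-1). W l i j * Dm d W l i j k p n))"
    by (simp add: sum_distrib_left)
  also have "\<dots> = (\<Sum>p<d k. W (Suc k) m p * (real k * chainW d W k p n))"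
    using Suc.IH by simp
  also have "\<dots> = real k * chainW d W (Suc k) m n"
    by (simp add: sum_distrib_left algebra_simps)
  also have "F (Suc k) = (\<Sum>i<d (Suc k). \<Sum>j<d k. if i = m then W (Suc k) m j * chainW d W k j n else 0)"
    unfolding F_def by (intro sum.cong refl) (auto simp: Dm_below)
  also have "\<dots> = (\<Sum>j<d k. W (Suc k) m j * chainW d W k j n)"
    using Suc.prems by (simp add: sum.swap[of _ "{..<d k}"] sum.delta)
  finally show ?case unfolding F_def by (simp add: algebra_simps)
qed
definition FW :: "(nat \<Rightarrow> nat) \<Rightarrow> (nat \<Rightarrow> mat) \<Rightarrow> nat \<Rightarrow> real" where
  "FW d W l = (\<Sum>i<d l. \<Sum>j<d(l-1). (W l i j)^2)"

definition FN :: "(nat \<Rightarrow> nat) \<Rightarrow> (nat \<Rightarrow> mat) \<Rightarrow> nat \<Rightarrow> real" where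
  "FN d W k = (\<Sum>m<d k. \<Sum>n<d 0. (chainW d W k m n)^2)"

lemma FW_nonneg: "FW d W l \<ge> 0" unfolding FW_def by (intro sum_nonneg) auto
lemma FN_nonneg: "FN d W l \<ge> 0" unfolding FN_def by (intro sum_nonneg) auto

lemma submult:
  fixes A B :: "nat \<Rightarrow> nat \<Rightarrow> real"
  shows "(\<Sum>m\<in>M. \<Sum>n\<in>N. (\<Sum>p\<in>P. A m p * B p n)^2) \<le> (\<Sum>m\<in>M. \<Sum>p\<in>P. (A m p)^2) * (\<Sum>n\<in>N. \<Sum>p\<in>P. (B p n)^2)"
proof -
  have "(\<Sum>m\<in>M. \<Sum>n\<in>N. (\<Sum>p\<in>P. A m p * B p n)^2) \<le> (\<Sum>m\<in>M. \<Sum>n\<in>N. (\<Sum>p\<in>P. (A m p)^2) * (\<Sum>p\<in>P. (B p n)^2))"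
    by (intro sum_mono Cauchy_Schwarz_ineq_sum)
  also have "\<dots> = (\<Sum>m\<in>M. \<Sum>p\<in>P. (A m p)^2) * (\<Sum>n\<in>N. \<Sum>p\<in>P. (B p n)^2)"
    by (simp add: sum_product)
  finally show ?thesis .
qed

lemma chain1: "n < d 0 \<Longrightarrow> chainW d W 1 m n = W 1 m n"
  by (simp add: if_distrib sum.delta cong: if_cong)

lemma frob: "1 \<le> k \<Longrightarrow> FN d W k \<le> (\<Prod>l\<in>{1..k}. FW d W l)"
proof (induction k)
  case 0 then show ?case by simp
next
  case (Suc k)
  show ?case
  proof (cases "k = 0")
    case True
    have "FN d W 1 = FW d W 1" unfolding FN_def FW_def
    proof (intro sum.cong refl)
      fix x xa assume "xa \<in> {..<d (1-1)}"
      then have "xa < d 0" by simp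
      show "(chainW d W 1 x xa)\<^sup>2 = (W 1 x xa)\<^sup>2" by (simp only: chain1[of xa d W x, OF \<open>xa < d 0\<close>])
    qed simp
    then show ?thesis using True by simp
  next
    case False
    have "FN d W (Suc k) = (\<Sum>m<d (Suc k). \<Sum>n<d 0. (\<Sum>p<d k. W (Suc k) m p * chainW d W k p n)^2)"
      unfolding FN_def by simp
    also have "\<dots> \<le> (\<Sum>m<d (Suc k). \<Sum>p<d k. (W (Suc k) m p)^2) * (\<Sum>n<d 0. \<Sum>p<d k. (chainW d W k p n)^2)"
      by (rule submult)
    also have "\<dots> = FW d W (Suc k) * FN d W k"
      unfolding FW_def FN_def by (simp add: sum.swap[of _ "{..<d 0}"])
    also have "\<dots> \<le> FW d W (Suc k) * (\<Prod>l\<in>{1..k}. FW d W l)"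
      using Suc.IH False by (intro mult_left_mono FW_nonneg) auto
    also have "\<dots> = (\<Prod>l\<in>{1..Suc k}. FW d W l)"
      by (simp add: prod.cl_ivl_Suc)
    finally show ?thesis .
  qed
qed
lemma CS2:
  fixes a b :: "nat \<Rightarrow> nat \<Rightarrow> real"
  assumes "finite M" "finite P"
  shows "(\<Sum>m\<in>M. \<Sum>p\<in>P. a m p * b m p)^2 \<le> (\<Sum>m\<in>M. \<Sum>p\<in>P. (a m p)^2) * (\<Sum>m\<in>M. \<Sum>p\<in>P. (b m p)^2)"
proof -
  have e: "\<And>g::nat\<Rightarrow>nat\<Rightarrow>real. (\<Sum>m\<in>M. \<Sum>p\<in>P. g m p) = (\<Sum>x\<in>M \<times> P. g (fst x) (snd x))"
    using assms by (simp add: sum.cartesian_product split_beta)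
  show ?thesis unfolding e by (rule Cauchy_Schwarz_ineq_sum)
qed

lemma trace_bound:
  fixes k :: nat
  assumes mono: "\<forall>i j. 1 \<le> i \<longrightarrow> i \<le> j \<longrightarrow> j \<le> dmin d (Suc k) \<longrightarrow> y j \<le> y i"
    and nn: "\<forall>i\<in>{1..dmin d (Suc k)}. y i \<ge> 0" and y10: "y 1 \<ge> 0"
  shows "(\<Sum>m<d (Suc k). \<Sum>n<d 0. Ymat d (Suc k) y m n * chainW d W (Suc k) m n)^2
     \<le> (y 1)^2 * (FW d W (Suc k) * FN d W k)"
proof -
  define M where "M = dmin d (Suc k)"
  define C where "C = chainW d W (Suc k)"
  have M0: "M \<le> d 0" "M \<le> d (Suc k)" by (simp_all add: dmin_def M_def)
  have T: "(\<Sum>m<d (Suc k). \<Sum>n<d 0. Ymat d (Suc k) y m n * C m n) = (\<Sum>m<M. y (Suc m) * C m m)"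
  proof -
    have "(\<Sum>m<d (Suc k). \<Sum>n<d 0. Ymat d (Suc k) y m n * C m n) = (\<Sum>m<d (Suc k). if m < M then y (Suc m) * C m m else 0)"
    proof (rule sum.cong[OF refl])
      fix m assume "m \<in> {..<d (Suc k)}"
      have "(\<Sum>n<d 0. Ymat d (Suc k) y m n * C m n) = (\<Sum>n<d 0. if n = m then (if m < M then y (Suc m) * C m m else 0) else 0)"
        unfolding Ymat_def M_def by (rule sum.cong) auto
      also have "\<dots> = (if m < M then y(Suc m) * C m m else 0)" using M0 by (subst sum.delta) auto
      finally show "(\<Sum>n<d 0. Ymat d (Suc k) y m n * C m n) = (if m < M then y(Suc m) * C m m else 0)" .
    qed
    also have "\<dots> = (\<Sum>m\<in>{x\<in>{..<d (Suc k)}. x < M}. y(Suc m) * C m m)" by (rule sum.inter_filter[symmetric]) simp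
    also have "{x\<in>{..<d (Suc k)}. x < M} = {..<M}" using M0 by auto
    finally show ?thesis .
  qed
  have y1: "0 \<le> y (Suc m)" "y (Suc m) \<le> y 1" if "m < M" for m
  proof -
    have "Suc m \<le> dmin d (Suc k)" using that unfolding M_def by simp
    then show "0 \<le> y (Suc m)" "y (Suc m) \<le> y 1"
      using mono[rule_format, of 1 "Suc m"] nn[rule_format, of "Suc m"] by auto
  qed
  define X where "X = (\<Sum>m<M. \<Sum>p<d k. \<bar>W (Suc k) m p\<bar> * \<bar>chainW d W k p m\<bar>)"
  have X0: "X \<ge> 0" unfolding X_def by (intro sum_nonneg) auto
  have "\<bar>\<Sum>m<M. y (Suc m) * C m m\<bar> \<le> (\<Sum>m<M. \<bar>y (Suc m) * C m m\<bar>)" by (rule sum_abs)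
  also have "\<dots> \<le> (\<Sum>m<M. y 1 * \<bar>C m m\<bar>)"
  proof (rule sum_mono)
    fix m assume "m \<in> {..<M}"
    then have "0 \<le> y (Suc m)" "y (Suc m) \<le> y 1" using y1 by auto
    then show "\<bar>y (Suc m) * C m m\<bar> \<le> y 1 * \<bar>C m m\<bar>"
      by (simp add: abs_mult mult_right_mono)
  qed
  also have "\<dots> = y 1 * (\<Sum>m<M. \<bar>C m m\<bar>)" by (simp add: sum_distrib_left)
  also have "\<dots> \<le> y 1 * X"
  proof (rule mult_left_mono)
    show "0 \<le> y 1" by (rule y10)
    show "(\<Sum>m<M. \<bar>C m m\<bar>) \<le> X" unfolding X_def C_def
      by (intro sum_mono) (simp add: sum_abs[THEN order_trans] abs_mult)
  qed
  finally have Tb: "\<bar>\<Sum>m<M. y (Suc m) * C m m\<bar> \<le> y 1 * X" .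
  have "X^2 \<le> (\<Sum>m<M. \<Sum>p<d k. \<bar>W (Suc k) m p\<bar>^2) * (\<Sum>m<M. \<Sum>p<d k. \<bar>chainW d W k p m\<bar>^2)"
    unfolding X_def by (rule CS2) auto
  also have "\<dots> \<le> FW d W (Suc k) * FN d W k"
  proof (rule mult_mono)
    show "(\<Sum>m<M. \<Sum>p<d k. \<bar>W (Suc k) m p\<bar>^2) \<le> FW d W (Suc k)"
      unfolding FW_def using M0 by (auto intro!: sum_mono2 sum_nonneg)
    have "(\<Sum>m<M. \<Sum>p<d k. \<bar>chainW d W k p m\<bar>^2) \<le> (\<Sum>m<d 0. \<Sum>p<d k. (chainW d W k p m)^2)"
      using M0 by (auto intro!: sum_mono2 sum_nonneg)
    also have "\<dots> = FN d W k" unfolding FN_def by (rule sum.swap)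
    finally show "(\<Sum>m<M. \<Sum>p<d k. \<bar>chainW d W k p m\<bar>^2) \<le> FN d W k" .
  qed (auto intro!: sum_nonneg simp: FW_nonneg)
  finally have X2: "X^2 \<le> FW d W (Suc k) * FN d W k" .
  have "(\<Sum>m<M. y (Suc m) * C m m)^2 \<le> (y 1 * X)^2"
    using Tb by (metis abs_le_square_iff abs_of_nonneg dual_order.trans abs_ge_zero)
  also have "\<dots> = (y 1)^2 * X^2" by (simp add: power_mult_distrib)
  also have "\<dots> \<le> (y 1)^2 * (FW d W (Suc k) * FN d W k)" using X2 by (intro mult_left_mono) auto
  finally show ?thesis using T unfolding C_def by simp
qed
lemma sqnorm_FW: "sqnormW d L W = (\<Sum>l\<in>{1..L}. FW d W l)"
  unfolding sqnormW_def FW_def by simp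

lemma amgm:
  assumes "L \<ge> 1"
  shows "(\<Prod>l\<in>{1..L}. FW d W l) \<le> (sqnormW d L W / real L)^L"
proof -
  define a where "a = (\<Prod>l\<in>{1..L}. FW d W l)"
  have a0: "a \<ge> 0" unfolding a_def by (intro prod_nonneg FW_nonneg)
  have c: "card {1..L} = L" by simp
  have "(\<Sum>l\<in>{1..L}. FW d W l / real L) \<ge> a powr (1 / real L)"
    using arith_geom_mean[of "{1..L}" "FW d W"] assms FW_nonneg unfolding a_def c by auto
  moreover have "(\<Sum>l\<in>{1..L}. FW d W l / real L) = sqnormW d L W / real L"
    by (simp add: sqnorm_FW sum_divide_distrib)
  ultimately have h: "a powr (1 / real L) \<le> sqnormW d L W / real L" by simp
  have "(a powr (1 / real L))^L = a"
  proof (cases "a = 0")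
    case True then show ?thesis using assms by simp
  next
    case False
    then have "a > 0" using a0 by simp
    then have "(a powr (1 / real L))^L = (a powr (1 / real L)) powr (real L)"
      by (simp add: powr_realpow)
    also have "\<dots> = a" using assms \<open>a > 0\<close> by (simp add: powr_powr)
    finally show ?thesis .
  qed
  moreover have "(a powr (1 / real L))^L \<le> (sqnormW d L W / real L)^L"
    using h by (intro power_mono) auto
  ultimately show ?thesis unfolding a_def by simp
qed

lemma inner_identity:
  "(\<Sum>l\<in>{1..L}. \<Sum>i<d l. \<Sum>j<d(l-1). gradG d L lam y W l i j * W l i j)
   = 2 * lam * sqnormW d L W + 2 * real L * (\<Sum>m<d L. \<Sum>n<d 0. (chainW d W L m n - sqrt lam * Ymat d L y m n) * chainW d W L m n)"
proof -
  define X where "X m n = chainW d W L m n - sqrt lam * Ymat d L y m n" for m n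
  have "(\<Sum>l\<in>{1..L}. \<Sum>i<d l. \<Sum>j<d(l-1). gradG d L lam y W l i j * W l i j)
    = (\<Sum>l\<in>{1..L}. \<Sum>i<d l. \<Sum>j<d(l-1). 2 * (\<Sum>m<d L. \<Sum>n<d 0. X m n * (W l i j * Dm d W l i j L m n)) + 2 * lam * (W l i j)^2)"
    by (intro sum.cong refl) (auto simp: grad_formula X_def algebra_simps power2_eq_square sum_distrib_left)
  also have "\<dots> = 2 * (\<Sum>l\<in>{1..L}. \<Sum>i<d l. \<Sum>j<d(l-1). \<Sum>m<d L. \<Sum>n<d 0. X m n * (W l i j * Dm d W l i j L m n)) + 2 * lam * sqnormW d L W"
    by (simp add: sum.distrib sum_distrib_left sqnormW_def)
  also have "(\<Sum>l\<in>{1..L}. \<Sum>i<d l. \<Sum>j<d(l-1). \<Sum>m<d L. \<Sum>n<d 0. X m n * (W l i j * Dm d W l i j L m n))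
     = (\<Sum>m<d L. \<Sum>l\<in>{1..L}. \<Sum>i<d l. \<Sum>j<d(l-1). \<Sum>n<d 0. X m n * (W l i j * Dm d W l i j L m n))"
    by (rule trip_swap)
  also have "\<dots> = (\<Sum>m<d L. \<Sum>n<d 0. \<Sum>l\<in>{1..L}. \<Sum>i<d l. \<Sum>j<d(l-1). X m n * (W l i j * Dm d W l i j L m n))"
    by (intro sum.cong refl trip_swap)
  also have "\<dots> = (\<Sum>m<d L. \<Sum>n<d 0. X m n * (real L * chainW d W L m n))"
  proof (intro sum.cong refl)
    fix m n assume "m \<in> {..<d L}"
    then have "m < d L" by simp
    have "(\<Sum>l\<in>{1..L}. \<Sum>i<d l. \<Sum>j<d(l-1). X m n * (W l i j * Dm d W l i j L m n))
       = X m n * (\<Sum>l\<in>{1..L}. \<Sum>i<d l. \<Sum>j<d(l-1). W l i j * Dm d W l i j L m n)"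
      by (simp add: sum_distrib_left)
    also have "\<dots> = X m n * (real L * chainW d W L m n)" using euler[of m d L W n, OF \<open>m < d L\<close>] by simp
    finally show "(\<Sum>l\<in>{1..L}. \<Sum>i<d l. \<Sum>j<d(l-1). X m n * (W l i j * Dm d W l i j L m n)) = X m n * (real L * chainW d W L m n)" .
  qed
  finally show ?thesis unfolding X_def by (simp add: sum_distrib_left algebra_simps)
qed
lemma trip_Sigma:
  fixes d :: "nat \<Rightarrow> nat" and f :: "nat \<Rightarrow> nat \<Rightarrow> nat \<Rightarrow> real"
  assumes "finite A"
  shows "(\<Sum>l\<in>A. \<Sum>i<d l. \<Sum>j<d(l-1). f l i j) = (\<Sum>x\<in>Sigma A (\<lambda>l. Sigma {..<d l} (\<lambda>i. {..<d(l-1)})). f (fst x) (fst (snd x)) (snd (snd x)))"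
proof -
  have "(\<Sum>l\<in>A. \<Sum>i<d l. \<Sum>j<d(l-1). f l i j) = (\<Sum>l\<in>A. \<Sum>x\<in>Sigma {..<d l} (\<lambda>i. {..<d(l-1)}). f l (fst x) (snd x))"
    by (intro sum.cong refl) (simp add: sum.Sigma split_beta)
  also have "\<dots> = (\<Sum>x\<in>Sigma A (\<lambda>l. Sigma {..<d l} (\<lambda>i. {..<d(l-1)})). f (fst x) (fst (snd x)) (snd (snd x)))"
    using assms by (simp add: sum.Sigma split_beta)
  finally show ?thesis .
qed

lemma CS3:
  fixes d :: "nat \<Rightarrow> nat" and a b :: "nat \<Rightarrow> nat \<Rightarrow> nat \<Rightarrow> real"
  assumes "finite A"
  shows "(\<Sum>l\<in>A. \<Sum>i<d l. \<Sum>j<d(l-1). a l i j * b l i j)^2 \<le> (\<Sum>l\<in>A. \<Sum>i<d l. \<Sum>j<d(l-1). (a l i j)^2) * (\<Sum>l\<in>A. \<Sum>i<d l. \<Sum>j<d(l-1). (b l i j)^2)"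
  unfolding trip_Sigma[where d=d, OF assms] by (rule Cauchy_Schwarz_ineq_sum)

lemma main3:
  fixes L :: nat and d :: "nat \<Rightarrow> nat" and lam :: real and y :: "nat \<Rightarrow> real"
    and W :: "nat \<Rightarrow> nat \<Rightarrow> nat \<Rightarrow> real"
  assumes hL: "L \<ge> 3"
    and hlam: "lam > 0"
    and hy_mono: "\<forall>i j. 1 \<le> i \<longrightarrow> i \<le> j \<longrightarrow> j \<le> dmin d L \<longrightarrow> y j \<le> y i"
    and hy_nonneg: "\<forall>i\<in>{1..dmin d L}. y i \<ge> 0"
    and y10: "y 1 \<ge> 0"
    and hW: "sqrt (sqnormW d L W) \<le> eps0 d L lam y"
  shows "sqrt (sqnormW d L W) \<le> kappa0 d L lam y * gradnormG d L lam y W"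
proof -
  define S where "S = sqnormW d L W"
  define s where "s = sqrt S"
  define G2 where "G2 = (\<Sum>l\<in>{1..L}. \<Sum>i<d l. \<Sum>j<d (l - 1). (gradG d L lam y W l i j)\<^sup>2)"
  define gn where "gn = sqrt G2"
  define ip where "ip = (\<Sum>l\<in>{1..L}. \<Sum>i<d l. \<Sum>j<d(l-1). gradG d L lam y W l i j * W l i j)"
  define T where "T = (\<Sum>m<d L. \<Sum>n<d 0. Ymat d L y m n * chainW d W L m n)"
  define CC where "CC = (\<Sum>m<d L. \<Sum>n<d 0. (chainW d W L m n)^2)"
  have S0: "S \<ge> 0" unfolding S_def sqnorm_FW by (intro sum_nonneg FW_nonneg)
  have s0: "s \<ge> 0" unfolding s_def using S0 by simp
  have sS: "s^2 = S" unfolding s_def using S0 by simp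
  have G0: "G2 \<ge> 0" unfolding G2_def by (intro sum_nonneg) auto
  have CC0: "CC \<ge> 0" unfolding CC_def by (intro sum_nonneg) auto
  have "ip^2 \<le> G2 * S" unfolding ip_def G2_def S_def sqnormW_def by (rule CS3) simp
  then have "ip \<le> sqrt (G2 * S)" by (rule real_le_rsqrt)
  then have ip_le: "ip \<le> gn * s" unfolding gn_def s_def by (simp add: real_sqrt_mult)
  have "ip = 2 * lam * S + 2 * real L * (CC - sqrt lam * T)"
    unfolding ip_def inner_identity S_def CC_def T_def
    by (simp add: algebra_simps sum_subtractf sum_distrib_left power2_eq_square)
  then have ip_ge: "ip \<ge> 2 * lam * S - 2 * real L * sqrt lam * T"
    using CC0 by (simp add: algebra_simps)
  have LS: "L = Suc (L - 1)" using hL by simp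
  have "T^2 \<le> (y 1)^2 * (FW d W L * FN d W (L - 1))"
    using trace_bound[of d "L-1" y W, unfolded LS[symmetric]] hy_mono hy_nonneg y10 unfolding T_def
    by blast
  also have "\<dots> \<le> (y 1)^2 * (FW d W L * (\<Prod>l\<in>{1..L-1}. FW d W l))"
    using frob[of "L-1" d W] hL by (intro mult_left_mono FW_nonneg) (auto intro: FW_nonneg)
  also have "FW d W L * (\<Prod>l\<in>{1..L-1}. FW d W l) = (\<Prod>l\<in>{1..L}. FW d W l)"
    using prod.cl_ivl_Suc[of "FW d W" 1 "L-1"] hL by (simp add: LS[symmetric] mult.commute)
  also have "(\<Prod>l\<in>{1..L}. FW d W l) \<le> (S / real L)^L"
    unfolding S_def using amgm[of L d W] hL by simp
  finally have T2: "T^2 \<le> (y 1)^2 * (S / real L)^L" by (simp add: mult_left_mono)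
  have LL: "(real L)^2 \<le> (real L)^L"
    using hL by (intro power_increasing) auto
  have "(real L * T)^2 \<le> (real L)^2 * ((y 1)^2 * (S / real L)^L)"
    using T2 by (simp add: power_mult_distrib mult_left_mono)
  also have "\<dots> = (y 1)^2 * S^L * ((real L)^2 / (real L)^L)"
    by (simp add: power_divide)
  also have "\<dots> \<le> (y 1)^2 * S^L * 1"
    using LL hL S0 by (intro mult_left_mono) auto
  also have "\<dots> = (y 1 * s^L)^2"
  proof -
    have h1: "(s^L)^2 = S^L" unfolding sS[symmetric] by (metis power_mult mult.commute)
    have "(y 1 * s^L)^2 = (y 1)^2 * (s^L)^2" by (rule power_mult_distrib)
    then show ?thesis by (simp only: h1 mult_1_right)
  qed
  finally have "(real L * T)^2 \<le> (y 1 * s^L)^2" .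
  then have LT: "real L * T \<le> y 1 * s^L"
    by (rule power2_le_imp_le) (use y10 s0 in simp)
  have ys: "y 1 * s^(L-2) \<le> sqrt lam / 3"
  proof (cases "y 1 = 0")
    case True then show ?thesis using hlam by simp
  next
    case False
    then have yp: "y 1 > 0" using y10 by simp
    define q where "q = sqrt lam / (3 * y 1)"
    have q0: "q > 0" unfolding q_def using yp hlam by simp
    have "s \<le> q powr (1 / (real L - 2))"
      using hW hL False unfolding s_def S_def eps0_def q_def by (auto simp: min_def split: if_splits)
    then have "s^(L-2) \<le> (q powr (1 / (real L - 2)))^(L-2)"
      using s0 by (intro power_mono) auto
    also have "\<dots> = q powr (1 / (real L - 2) * real (L-2))"
      using q0 by (simp add: powr_realpow[symmetric] powr_powr)
    also have "1 / (real L - 2) * real (L-2) = 1" using hL by (simp add: of_nat_diff)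
    finally have "s^(L-2) \<le> q" using q0 by simp
    then have "y 1 * s^(L-2) \<le> y 1 * q" using yp by (simp add: mult_left_mono)
    also have "\<dots> = sqrt lam / 3" unfolding q_def using yp by simp
    finally show ?thesis .
  qed
  have e2: "(L-2)+2 = L" using hL by simp
  have sL: "s^L = s^(L-2) * S"
    using power_add[of s "L-2" 2] sS by (simp only: e2)
  have "2 * real L * sqrt lam * T \<le> 2 * sqrt lam * (y 1 * s^L)"
    using LT hlam by (simp add: mult.assoc mult.left_commute[of "real L"])
  also have "\<dots> = 2 * sqrt lam * (y 1 * s^(L-2)) * S" unfolding sL by (simp add: algebra_simps)
  also have "\<dots> \<le> 2 * sqrt lam * (sqrt lam / 3) * S"
    using ys S0 hlam by (intro mult_right_mono mult_left_mono) auto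
  also have "\<dots> = 2 * lam * S / 3" using hlam by simp
  finally have X: "2 * real L * sqrt lam * T \<le> 2 * lam * S / 3" .
  have "ip \<ge> 4 * lam * S / 3" using ip_ge X by linarith
  then have key: "gn * s \<ge> 4 * lam * s^2 / 3" using ip_le sS by simp
  have k0: "kappa0 d L lam y = 3 * sqrt (real L) / (2 * lam)" using hL by (simp add: kappa0_def)
  show ?thesis
  proof (cases "s = 0")
    case True
    have "gn \<ge> 0" unfolding gn_def using G0 by simp
    then show ?thesis using True hlam unfolding s_def S_def k0 gradnormG_def gn_def G2_def by simp
  next
    case False
    then have sp: "s > 0" using s0 by simp
    from key have "gn \<ge> 4 * lam * s / 3" using sp by (simp add: power2_eq_square field_simps)
    have "sqrt (real L) \<ge> 1" using hL by simp
    have "kappa0 d L lam y * gn \<ge> 3 * sqrt (real L) / (2 * lam) * (4 * lam * s / 3)"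
      unfolding k0 using \<open>gn \<ge> 4 * lam * s / 3\<close> hlam by (intro mult_left_mono) auto
    also have "3 * sqrt (real L) / (2 * lam) * (4 * lam * s / 3) = 2 * sqrt (real L) * s"
      using hlam by (simp add: field_simps)
    also have "\<dots> \<ge> s"
    proof -
      have "1 \<le> 2 * sqrt (real L)" using \<open>sqrt (real L) \<ge> 1\<close> by linarith
      from mult_right_mono[OF this, of s] sp show ?thesis by simp
    qed
    finally show ?thesis unfolding s_def S_def gn_def G2_def gradnormG_def .
  qed
qed
lemma Dm12: "i < d 1 \<Longrightarrow> Dm d W 1 i j 2 m n = W 2 m i * (if n = j \<and> j < d 0 then 1 else 0)"
proof -
  assume i: "i < d 1"
  have D1: "Dm d W 1 i j 1 p n = (if p = i \<and> n = j \<and> j < d 0 then 1 else 0)" for p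
    by simp
  have "Dm d W 1 i j 2 m n = (\<Sum>p<d 1. W 2 m p * Dm d W 1 i j 1 p n)"
    by (simp add: numeral_2_eq_2)
  also have "\<dots> = (\<Sum>p<d 1. if p = i then W 2 m i * (if n = j \<and> j < d 0 then 1 else 0) else 0)"
    unfolding D1 by (rule sum.cong) auto
  also have "\<dots> = W 2 m i * (if n = j \<and> j < d 0 then 1 else 0)" using i by (subst sum.delta) auto
  finally show ?thesis .
qed

lemma Dm22: "j < d 1 \<Longrightarrow> n < d 0 \<Longrightarrow> Dm d W 2 i j 2 m n = (if m = i then W 1 j n else 0)"
proof -
  assume j: "j < d 1" and n: "n < d 0"
  have "Dm d W 2 i j 2 m n = (if m = i then chainW d W 1 j n else 0) + (\<Sum>p<d 1. W 2 m p * Dm d W 2 i j 1 p n)"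
    using j by (simp add: numeral_2_eq_2)
  also have "(\<Sum>p<d 1. W 2 m p * Dm d W 2 i j 1 p n) = 0" by (simp add: Dm_below)
  finally show ?thesis using chain1[of n d W j, OF n] by simp
qed

definition Xm :: "(nat \<Rightarrow> nat) \<Rightarrow> real \<Rightarrow> (nat \<Rightarrow> real) \<Rightarrow> (nat \<Rightarrow> mat) \<Rightarrow> mat" where
  "Xm d lam y W m n = chainW d W 2 m n - sqrt lam * Ymat d 2 y m n"

lemma g1:
  assumes "i < d 1" "j < d 0"
  shows "gradG d 2 lam y W 1 i j = 2 * (\<Sum>m<d 2. Xm d lam y W m j * W 2 m i) + 2 * lam * W 1 i j"
proof -
  have "gradG d 2 lam y W 1 i j = 2*(\<Sum>m<d 2. \<Sum>n<d 0. Xm d lam y W m n * Dm d W 1 i j 2 m n) + 2*lam*W 1 i j"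
    using grad_formula[of 1 2 i d j lam y W] assms unfolding Xm_def by simp
  also have "(\<Sum>m<d 2. \<Sum>n<d 0. Xm d lam y W m n * Dm d W 1 i j 2 m n) = (\<Sum>m<d 2. Xm d lam y W m j * W 2 m i)"
  proof (rule sum.cong[OF refl])
    fix m
    have "(\<Sum>n<d 0. Xm d lam y W m n * Dm d W 1 i j 2 m n) = (\<Sum>n<d 0. if n = j then Xm d lam y W m j * W 2 m i else 0)"
    proof (intro sum.cong refl)
      fix n assume "n \<in> {..<d 0}"
      show "Xm d lam y W m n * Dm d W 1 i j 2 m n = (if n = j then Xm d lam y W m j * W 2 m i else 0)"
        using Dm12[of i d W j m n] assms by simp
    qed
    also have "\<dots> = Xm d lam y W m j * W 2 m i" using assms by (subst sum.delta) auto
    finally show "(\<Sum>n<d 0. Xm d lam y W m n * Dm d W 1 i j 2 m n) = Xm d lam y W m j * W 2 m i" .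
  qed
  finally show ?thesis .
qed

lemma g2:
  assumes "i < d 2" "j < d 1"
  shows "gradG d 2 lam y W 2 i j = 2 * (\<Sum>n<d 0. Xm d lam y W i n * W 1 j n) + 2 * lam * W 2 i j"
proof -
  have "gradG d 2 lam y W 2 i j = 2*(\<Sum>m<d 2. \<Sum>n<d 0. Xm d lam y W m n * Dm d W 2 i j 2 m n) + 2*lam*W 2 i j"
    using grad_formula[of 2 2 i d j lam y W] assms unfolding Xm_def by simp
  also have "(\<Sum>m<d 2. \<Sum>n<d 0. Xm d lam y W m n * Dm d W 2 i j 2 m n) = (\<Sum>m<d 2. if m = i then (\<Sum>n<d 0. Xm d lam y W i n * W 1 j n) else 0)"
    using assms by (intro sum.cong refl) (auto simp: Dm22)
  also have "\<dots> = (\<Sum>n<d 0. Xm d lam y W i n * W 1 j n)" using assms by (subst sum.delta) auto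
  finally show ?thesis .
qed
lemma triangle3:
  fixes d :: "nat \<Rightarrow> nat" and a b :: "nat \<Rightarrow> nat \<Rightarrow> nat \<Rightarrow> real"
  assumes "finite A"
  shows "sqrt (\<Sum>l\<in>A. \<Sum>i<d l. \<Sum>j<d(l-1). (a l i j + b l i j)^2)
     \<le> sqrt (\<Sum>l\<in>A. \<Sum>i<d l. \<Sum>j<d(l-1). (a l i j)^2) + sqrt (\<Sum>l\<in>A. \<Sum>i<d l. \<Sum>j<d(l-1). (b l i j)^2)"
  unfolding trip_Sigma[where d=d, OF assms]
  using L2_set_triangle_ineq[of "\<lambda>x. a (fst x) (fst (snd x)) (snd (snd x))" "\<lambda>x. b (fst x) (fst (snd x)) (snd (snd x))"]
  unfolding L2_set_def by simp

lemma mu_props: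
  assumes lam: "lam > 0"
    and mono: "\<forall>i j. 1 \<le> i \<longrightarrow> i \<le> j \<longrightarrow> j \<le> dmin d L \<longrightarrow> y j \<le> y i"
  shows "0 \<le> muval d L lam y" "muval d L lam y \<le> lam"
    "\<And>k. 1 \<le> k \<Longrightarrow> k \<le> dmin d L \<Longrightarrow> y k > 0 \<Longrightarrow> muval d L lam y \<le> \<bar>lam - (y k)^2\<bar>"
proof -
  define R where "R = rY d L y"
  define f where "f i = \<bar>lam - (y i)^2\<bar>" for i
  have mv: "muval d L lam y = (if R = 0 then lam else min (Min (f ` {1..R})) lam)"
    unfolding muval_def R_def f_def by simp
  show "muval d L lam y \<le> lam" unfolding mv by auto
  show "0 \<le> muval d L lam y"
  proof (cases "R = 0")
    case True then show ?thesis unfolding mv using lam by simp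
  next
    case False
    then have "{1..R} \<noteq> {}" by simp
    then have "Min (f ` {1..R}) \<in> f ` {1..R}" by (intro Min_in) auto
    then have "Min (f ` {1..R}) \<ge> 0" unfolding f_def by auto
    then show ?thesis unfolding mv using lam False by simp
  qed
  fix k assume k: "1 \<le> k" "k \<le> dmin d L" "y k > 0"
  have "{1..k} \<subseteq> {i \<in> {1..dmin d L}. y i > 0}"
  proof
    fix i assume "i \<in> {1..k}"
    then have "1 \<le> i" "i \<le> k" by auto
    then have "y k \<le> y i" using mono[rule_format, of i k] k by auto
    then show "i \<in> {i \<in> {1..dmin d L}. y i > 0}" using k \<open>1 \<le> i\<close> \<open>i \<le> k\<close> by auto
  qed
  then have "card {1..k} \<le> R" unfolding R_def rY_def by (intro card_mono) auto
  then have kR: "k \<le> R" by simp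
  then have "R \<noteq> 0" using k by simp
  have "Min (f ` {1..R}) \<le> f k" using kR k by (intro Min_le) auto
  then show "muval d L lam y \<le> \<bar>lam - (y k)^2\<bar>" unfolding mv f_def using \<open>R \<noteq> 0\<close> by simp
qed

lemma Kbound:
  fixes lam mu y y1 :: real
  assumes lam: "lam > 0" and y: "0 \<le> y" "y \<le> y1" and mu: "0 \<le> mu" "mu \<le> lam"
    and pos: "y > 0 \<Longrightarrow> mu \<le> \<bar>lam - y^2\<bar>"
  shows "(sqrt lam * mu / (sqrt lam + y1))^2 \<le> (lam - sqrt lam * y)^2"
proof -
  define sl where "sl = sqrt lam"
  have sl: "sl > 0" "sl^2 = lam" unfolding sl_def using lam by auto
  have den: "sl + y1 > 0" using sl y by simp
  have K0: "sl * mu / (sl + y1) \<ge> 0" using sl mu den by simp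
  have "sl * mu / (sl + y1) \<le> \<bar>lam - sl * y\<bar>"
  proof (cases "y > 0")
    case False
    then have "y = 0" using y by simp
    have "sl * mu \<le> sl * lam" using mu sl by simp
    also have "\<dots> \<le> lam * (sl + y1)" using y lam by (simp add: algebra_simps)
    finally have "sl * mu / (sl + y1) \<le> lam" using den by (simp add: divide_le_eq)
    then show ?thesis using \<open>y = 0\<close> lam by simp
  next
    case True
    have e0: "lam - y^2 = (sl - y) * (sl + y)"
      by (simp add: sl(2)[symmetric] power2_eq_square algebra_simps)
    have e: "\<bar>lam - y^2\<bar> = \<bar>sl - y\<bar> * (sl + y)"
      unfolding e0 abs_mult using sl y by simp
    have "mu \<le> \<bar>sl - y\<bar> * (sl + y)" using pos[OF True] e by simp
    also have "\<dots> \<le> \<bar>sl - y\<bar> * (sl + y1)" using y by (intro mult_left_mono) auto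
    finally have "mu / (sl + y1) \<le> \<bar>sl - y\<bar>" using den by (simp add: divide_le_eq)
    then have "sl * (mu / (sl + y1)) \<le> sl * \<bar>sl - y\<bar>" using sl by (intro mult_left_mono) auto
    also have "sl * \<bar>sl - y\<bar> = \<bar>lam - sl * y\<bar>"
    proof -
      have "lam - sl * y = sl * (sl - y)" by (simp add: sl(2)[symmetric] power2_eq_square algebra_simps)
      then show ?thesis using sl by (simp add: abs_mult)
    qed
    finally show ?thesis by simp
  qed
  then have "(sl * mu / (sl + y1))^2 \<le> (\<bar>lam - sl * y\<bar>)^2" using K0 by (intro power_mono) auto
  then show ?thesis unfolding sl_def by simp
qed

lemma twobytwo:
  fixes lam c K a b :: real
  assumes "lam \<ge> 0" "c \<ge> 0" "K^2 \<le> (lam - c)^2"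
  shows "K^2 * (a^2 + b^2) \<le> (lam * a - c * b)^2 + (lam * b - c * a)^2"
proof -
  have e: "(lam * a - c * b)^2 + (lam * b - c * a)^2 = (lam - c)^2 * (a^2 + b^2) + 2 * lam * c * (a - b)^2"
    by (simp add: power2_eq_square algebra_simps)
  have "K^2 * (a^2 + b^2) \<le> (lam - c)^2 * (a^2 + b^2)" using assms(3) by (intro mult_right_mono) auto
  also have "\<dots> \<le> (lam - c)^2 * (a^2 + b^2) + 2 * lam * c * (a - b)^2" using assms by simp
  finally show ?thesis unfolding e .
qed

lemma sum_split_at:
  fixes f :: "nat \<Rightarrow> real"
  assumes "M \<le> N"
  shows "(\<Sum>j<N. f j) = (\<Sum>j<M. f j) + (\<Sum>j\<in>{M..<N}. f j)"
proof -
  have "{..<N} = {..<M} \<union> {M..<N}" using assms by auto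
  then have "(\<Sum>j<N. f j) = sum f ({..<M} \<union> {M..<N})" by simp
  also have "\<dots> = (\<Sum>j<M. f j) + (\<Sum>j\<in>{M..<N}. f j)" by (rule sum.union_disjoint) auto
  finally show ?thesis .
qed
lemma sum12: "(\<Sum>l\<in>{1..2::nat}. F l) = F 1 + (F 2 :: real)"
proof -
  have "{1..2::nat} = {1,2}" by auto
  then show ?thesis by simp
qed

lemma main2:
  fixes d :: "nat \<Rightarrow> nat" and lam :: real and y :: "nat \<Rightarrow> real"
    and W :: "nat \<Rightarrow> nat \<Rightarrow> nat \<Rightarrow> real"
  assumes hlam: "lam > 0"
    and hy_mono: "\<forall>i j. 1 \<le> i \<longrightarrow> i \<le> j \<longrightarrow> j \<le> dmin d 2 \<longrightarrow> y j \<le> y i"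
    and hy_nonneg: "\<forall>i\<in>{1..dmin d 2}. y i \<ge> 0"
    and y10: "y 1 \<ge> 0"
    and hW: "sqrt (sqnormW d 2 W) \<le> eps0 d 2 lam y"
  shows "sqrt (sqnormW d 2 W) \<le> kappa0 d 2 lam y * gradnormG d 2 lam y W"
proof -
  define M where "M = dmin d 2"
  have M0: "M \<le> d 0" "M \<le> d 2" by (simp_all add: M_def dmin_def)
  define mu where "mu = muval d 2 lam y"
  have mu0: "0 \<le> mu" and mulam: "mu \<le> lam" unfolding mu_def using mu_props[OF hlam hy_mono] by auto
  have mupos: "\<And>k. 1 \<le> k \<Longrightarrow> k \<le> M \<Longrightarrow> y k > 0 \<Longrightarrow> mu \<le> \<bar>lam - (y k)^2\<bar>"
    unfolding mu_def M_def using mu_props(3)[OF hlam hy_mono] by auto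
  define K where "K = sqrt lam * mu / (sqrt lam + y 1)"
  have K0: "K \<ge> 0" unfolding K_def using mu0 y10 hlam by simp
  have Klam: "K^2 \<le> lam^2"
    using Kbound[of lam 0 "y 1" mu] hlam y10 mu0 mulam unfolding K_def by simp
  define c where "c j = (if j < M then sqrt lam * y (Suc j) else 0)" for j
  have c0: "c j \<ge> 0" for j
  proof (cases "j < M")
    case True
    then have "0 \<le> y (Suc j)" using hy_nonneg unfolding M_def by auto
    then show ?thesis unfolding c_def using hlam by simp
  qed (simp add: c_def)
  have cK: "K^2 \<le> (lam - c j)^2" if "j < M" for j
  proof -
    have j: "1 \<le> Suc j" "Suc j \<le> M" using that by auto
    have "0 \<le> y (Suc j)" using hy_nonneg j unfolding M_def by auto
    moreover have "y (Suc j) \<le> y 1" using hy_mono[rule_format, of 1 "Suc j"] j unfolding M_def by auto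
    ultimately show ?thesis
      using Kbound[of lam "y (Suc j)" "y 1" mu] hlam mu0 mulam mupos[OF j] that
      unfolding K_def c_def by simp
  qed
  define S where "S = sqnormW d 2 W"
  have SF: "S = FW d W 1 + FW d W 2" unfolding S_def sqnorm_FW sum12 ..
  have S0: "S \<ge> 0" using SF FW_nonneg[of d W 1] FW_nonneg[of d W 2] by simp
  define s where "s = sqrt S"
  have s0: "s \<ge> 0" unfolding s_def using S0 by simp
  have sS: "s^2 = S" unfolding s_def using S0 by simp
  define C where "C = chainW d W 2"
  define lin where "lin (l::nat) (i::nat) (j::nat) = (if l = 1 then 2 * (lam * W 1 i j - c j * W 2 j i)
      else 2 * (lam * W 2 i j - c i * W 1 j i))" for l i j
  define cub where "cub (l::nat) (i::nat) (j::nat) = (if l = 1 then 2 * (\<Sum>m<d 2. C m j * W 2 m i)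
      else 2 * (\<Sum>n<d 0. C i n * W 1 j n))" for l i j
  have Ys1: "(\<Sum>m<d 2. Ymat d 2 y m j * W 2 m i) = (if j < M then y (Suc j) * W 2 j i else 0)" for i j
  proof -
    have "(\<Sum>m<d 2. Ymat d 2 y m j * W 2 m i) = (\<Sum>m<d 2. if m = j then (if j < M then y (Suc j) * W 2 j i else 0) else 0)"
      unfolding Ymat_def M_def by (intro sum.cong refl) auto
    also have "\<dots> = (if j < M then y (Suc j) * W 2 j i else 0)" using M0 by (subst sum.delta) auto
    finally show ?thesis .
  qed
  have Ys2: "(\<Sum>n<d 0. Ymat d 2 y i n * W 1 j n) = (if i < M then y (Suc i) * W 1 j i else 0)" for i j
  proof -
    have "(\<Sum>n<d 0. Ymat d 2 y i n * W 1 j n) = (\<Sum>n<d 0. if n = i then (if i < M then y (Suc i) * W 1 j i else 0) else 0)"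
      unfolding Ymat_def M_def by (intro sum.cong refl) auto
    also have "\<dots> = (if i < M then y (Suc i) * W 1 j i else 0)" using M0 by (subst sum.delta) auto
    finally show ?thesis .
  qed
  have gsplit: "gradG d 2 lam y W l i j = lin l i j + cub l i j"
    if "l \<in> {1..2}" "i < d l" "j < d (l - 1)" for l i j
  proof -
    have "l = 1 \<or> l = 2" using that(1) by auto
    then show ?thesis
    proof
      assume l: "l = 1"
      have "gradG d 2 lam y W l i j = 2 * (\<Sum>m<d 2. Xm d lam y W m j * W 2 m i) + 2 * lam * W 1 i j"
        using g1[of i d j lam y W] that l by simp
      also have "(\<Sum>m<d 2. Xm d lam y W m j * W 2 m i) = (\<Sum>m<d 2. C m j * W 2 m i) - sqrt lam * (\<Sum>m<d 2. Ymat d 2 y m j * W 2 m i)"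
        unfolding Xm_def C_def by (simp add: algebra_simps sum_subtractf sum_distrib_left)
      finally show ?thesis unfolding lin_def cub_def Ys1 c_def using l by (simp add: algebra_simps split: if_splits)
    next
      assume l: "l = 2"
      have "gradG d 2 lam y W l i j = 2 * (\<Sum>n<d 0. Xm d lam y W i n * W 1 j n) + 2 * lam * W 2 i j"
        using g2[of i d j lam y W] that l by simp
      also have "(\<Sum>n<d 0. Xm d lam y W i n * W 1 j n) = (\<Sum>n<d 0. C i n * W 1 j n) - sqrt lam * (\<Sum>n<d 0. Ymat d 2 y i n * W 1 j n)"
        unfolding Xm_def C_def by (simp add: algebra_simps sum_subtractf sum_distrib_left)
      finally show ?thesis unfolding lin_def cub_def Ys2 c_def using l by (simp add: algebra_simps split: if_splits)
    qed
  qed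
  define gn where "gn = gradnormG d 2 lam y W"
  have gn_def': "gn = sqrt (\<Sum>l\<in>{1..2}. \<Sum>i<d l. \<Sum>j<d (l - 1). (gradG d 2 lam y W l i j)^2)"
    unfolding gn_def gradnormG_def ..
  define LIN where "LIN = (\<Sum>l\<in>{1..2::nat}. \<Sum>i<d l. \<Sum>j<d (l - 1). (lin l i j)^2)"
  define CUB where "CUB = (\<Sum>l\<in>{1..2::nat}. \<Sum>i<d l. \<Sum>j<d (l - 1). (cub l i j)^2)"
  have tri: "sqrt LIN \<le> gn + sqrt CUB"
  proof -
    have "LIN = (\<Sum>l\<in>{1..2::nat}. \<Sum>i<d l. \<Sum>j<d (l - 1). (gradG d 2 lam y W l i j + - cub l i j)^2)"
      unfolding LIN_def by (intro sum.cong refl) (simp add: gsplit)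
    moreover have "CUB = (\<Sum>l\<in>{1..2::nat}. \<Sum>i<d l. \<Sum>j<d (l - 1). (- cub l i j)^2)"
      unfolding CUB_def by simp
    ultimately show ?thesis unfolding gn_def'
      using triangle3[where A="{1..2::nat}" and d=d and a="\<lambda>l i j. gradG d 2 lam y W l i j" and b="\<lambda>l i j. - cub l i j"] by simp
  qed
  have CUBb: "CUB \<le> S^3"
  proof -
    have "CUB = (\<Sum>i<d 1. \<Sum>j<d 0. (cub 1 i j)^2) + (\<Sum>i<d 2. \<Sum>j<d 1. (cub 2 i j)^2)"
      unfolding CUB_def sum12 by simp
    also have "(\<Sum>i<d 1. \<Sum>j<d 0. (cub 1 i j)^2) = 4 * (\<Sum>i<d 1. \<Sum>j<d 0. (\<Sum>m<d 2. W 2 m i * C m j)^2)"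
    proof -
      have e: "(cub 1 i j)^2 = 4 * (\<Sum>m<d 2. W 2 m i * C m j)^2" for i j
      proof -
        have "(\<Sum>m<d 2. C m j * W 2 m i) = (\<Sum>m<d 2. W 2 m i * C m j)" by (simp add: mult.commute)
        then show ?thesis unfolding cub_def by (simp add: power_mult_distrib)
      qed
      show ?thesis unfolding e by (simp add: sum_distrib_left)
    qed
    also have "(\<Sum>i<d 1. \<Sum>j<d 0. (\<Sum>m<d 2. W 2 m i * C m j)^2) \<le> (\<Sum>i<d 1. \<Sum>m<d 2. (W 2 m i)^2) * (\<Sum>j<d 0. \<Sum>m<d 2. (C m j)^2)"
      by (rule submult)
    also have "(\<Sum>i<d 1. \<Sum>m<d 2. (W 2 m i)^2) = FW d W 2"
      unfolding FW_def by (simp add: sum.swap[of _ "{..<d (Suc 0)}"])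
    also have "(\<Sum>j<d 0. \<Sum>m<d 2. (C m j)^2) = FN d W 2"
      unfolding FN_def C_def by (rule sum.swap)
    also have "(\<Sum>i<d 2. \<Sum>j<d 1. (cub 2 i j)^2) = 4 * (\<Sum>i<d 2. \<Sum>j<d 1. (\<Sum>n<d 0. C i n * W 1 j n)^2)"
    proof -
      have e: "(cub 2 i j)^2 = 4 * (\<Sum>n<d 0. C i n * W 1 j n)^2" for i j
        unfolding cub_def by (simp add: power_mult_distrib)
      show ?thesis unfolding e by (simp add: sum_distrib_left)
    qed
    also have "(\<Sum>i<d 2. \<Sum>j<d 1. (\<Sum>n<d 0. C i n * W 1 j n)^2) \<le> (\<Sum>i<d 2. \<Sum>n<d 0. (C i n)^2) * (\<Sum>j<d 1. \<Sum>n<d 0. (W 1 j n)^2)"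
      by (rule submult)
    also have "(\<Sum>i<d 2. \<Sum>n<d 0. (C i n)^2) = FN d W 2" unfolding FN_def C_def ..
    also have "(\<Sum>j<d 1. \<Sum>n<d 0. (W 1 j n)^2) = FW d W 1" unfolding FW_def by simp
    finally have "CUB \<le> 4 * (FW d W 2 * FN d W 2) + 4 * (FN d W 2 * FW d W 1)" by simp
    also have "\<dots> = 4 * FN d W 2 * S" unfolding SF by (simp add: algebra_simps)
    also have "\<dots> \<le> 4 * (FW d W 1 * FW d W 2) * S"
    proof -
      have "FN d W 2 \<le> (\<Prod>l\<in>{1..2}. FW d W l)" by (rule frob) simp
      also have "(\<Prod>l\<in>{1..2::nat}. FW d W l) = FW d W 1 * FW d W 2"
      proof -
        have "{1..2::nat} = {1,2}" by auto
        then show ?thesis by simp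
      qed
      finally show ?thesis using S0 by (intro mult_right_mono) auto
    qed
    also have "\<dots> \<le> S^2 * S"
    proof -
      have "4 * (FW d W 1 * FW d W 2) \<le> S^2" unfolding SF
        using sum_squares_ge_zero[of "FW d W 1 - FW d W 2" 0] by (simp add: power2_eq_square algebra_simps)
      then show ?thesis using S0 by (intro mult_right_mono) auto
    qed
    also have "\<dots> = S^3" by (simp add: power3_eq_cube power2_eq_square)
    finally show ?thesis .
  qed
  have per_i: "K^2 * ((\<Sum>j<d 0. (W 1 i j)^2) + (\<Sum>j<d 2. (W 2 j i)^2))
      \<le> (\<Sum>j<d 0. (lam * W 1 i j - c j * W 2 j i)^2) + (\<Sum>j<d 2. (lam * W 2 j i - c j * W 1 i j)^2)" for i
  proof -
    define P where "P j = (lam * W 1 i j - c j * W 2 j i)^2" for j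
    define Q where "Q j = (lam * W 2 j i - c j * W 1 i j)^2" for j
    define a where "a j = (W 1 i j)^2" for j
    define b where "b j = (W 2 j i)^2" for j
    have A1: "(\<Sum>j<M. K^2 * (a j + b j)) \<le> (\<Sum>j<M. P j + Q j)"
    proof (rule sum_mono)
      fix j assume "j \<in> {..<M}"
      then show "K^2 * (a j + b j) \<le> P j + Q j"
        unfolding a_def b_def P_def Q_def using twobytwo[of lam "c j" K] hlam c0 cK by simp
    qed
    have A2: "(\<Sum>j\<in>{M..<d 0}. K^2 * a j) \<le> (\<Sum>j\<in>{M..<d 0}. P j)"
    proof (rule sum_mono)
      fix j assume "j \<in> {M..<d 0}"
      then have "c j = 0" unfolding c_def by simp
      then have "P j = lam^2 * a j" unfolding P_def a_def by (simp add: power_mult_distrib)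
      then show "K^2 * a j \<le> P j" using Klam unfolding a_def by (simp add: mult_right_mono)
    qed
    have A3: "(\<Sum>j\<in>{M..<d 2}. K^2 * b j) \<le> (\<Sum>j\<in>{M..<d 2}. Q j)"
    proof (rule sum_mono)
      fix j assume "j \<in> {M..<d 2}"
      then have "c j = 0" unfolding c_def by simp
      then have "Q j = lam^2 * b j" unfolding Q_def b_def by (simp add: power_mult_distrib)
      then show "K^2 * b j \<le> Q j" using Klam unfolding b_def by (simp add: mult_right_mono)
    qed
    have "K^2 * ((\<Sum>j<d 0. a j) + (\<Sum>j<d 2. b j))
       = (\<Sum>j<M. K^2 * (a j + b j)) + (\<Sum>j\<in>{M..<d 0}. K^2 * a j) + (\<Sum>j\<in>{M..<d 2}. K^2 * b j)"
      unfolding sum_split_at[OF M0(1), of a] sum_split_at[OF M0(2), of b]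
      by (simp add: sum_distrib_left sum_distrib_right sum.distrib algebra_simps)
    also have "\<dots> \<le> (\<Sum>j<M. P j + Q j) + (\<Sum>j\<in>{M..<d 0}. P j) + (\<Sum>j\<in>{M..<d 2}. Q j)"
      using A1 A2 A3 by linarith
    also have "\<dots> = (\<Sum>j<d 0. P j) + (\<Sum>j<d 2. Q j)"
      unfolding sum_split_at[OF M0(1), of P] sum_split_at[OF M0(2), of Q]
      by (simp add: sum.distrib algebra_simps)
    finally show ?thesis unfolding a_def b_def P_def Q_def .
  qed
  have LINb: "4 * K^2 * S \<le> LIN"
  proof -
    have FW1: "FW d W 1 = (\<Sum>i<d 1. \<Sum>j<d 0. (W 1 i j)^2)" unfolding FW_def by simp
    have FW2: "FW d W 2 = (\<Sum>i<d 1. \<Sum>j<d 2. (W 2 j i)^2)"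
      unfolding FW_def by (simp add: sum.swap[of _ "{..<d (Suc 0)}"])
    have "LIN = (\<Sum>i<d 1. \<Sum>j<d 0. (lin 1 i j)^2) + (\<Sum>i<d 2. \<Sum>j<d 1. (lin 2 i j)^2)"
      unfolding LIN_def sum12 by simp
    also have "(\<Sum>i<d 1. \<Sum>j<d 0. (lin 1 i j)^2) = 4 * (\<Sum>i<d 1. \<Sum>j<d 0. (lam * W 1 i j - c j * W 2 j i)^2)"
    proof -
      have e: "(lin 1 i j)^2 = 4 * (lam * W 1 i j - c j * W 2 j i)^2" for i j
        unfolding lin_def by (simp add: power2_eq_square algebra_simps)
      show ?thesis unfolding e by (simp add: sum_distrib_left)
    qed
    also have "(\<Sum>i<d 2. \<Sum>j<d 1. (lin 2 i j)^2) = 4 * (\<Sum>i<d 2. \<Sum>j<d 1. (lam * W 2 i j - c i * W 1 j i)^2)"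
    proof -
      have e: "(lin 2 i j)^2 = 4 * (lam * W 2 i j - c i * W 1 j i)^2" for i j
        unfolding lin_def by (simp add: power2_eq_square algebra_simps)
      show ?thesis unfolding e by (simp add: sum_distrib_left)
    qed
    also have "(\<Sum>i<d 2. \<Sum>j<d 1. (lam * W 2 i j - c i * W 1 j i)^2) = (\<Sum>i<d 1. \<Sum>j<d 2. (lam * W 2 j i - c j * W 1 i j)^2)"
      by (rule sum.swap)
    finally have "LIN = 4 * ((\<Sum>i<d 1. \<Sum>j<d 0. (lam * W 1 i j - c j * W 2 j i)^2) + (\<Sum>i<d 1. \<Sum>j<d 2. (lam * W 2 j i - c j * W 1 i j)^2))"
      by simp
    also have "\<dots> = 4 * (\<Sum>i<d 1. (\<Sum>j<d 0. (lam * W 1 i j - c j * W 2 j i)^2) + (\<Sum>j<d 2. (lam * W 2 j i - c j * W 1 i j)^2))"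
      by (simp add: sum.distrib)
    finally have L1: "LIN = \<dots>" .
    have "4 * K^2 * S = 4 * (\<Sum>i<d 1. K^2 * ((\<Sum>j<d 0. (W 1 i j)^2) + (\<Sum>j<d 2. (W 2 j i)^2)))"
      unfolding SF FW1 FW2 by (simp add: sum_distrib_left sum.distrib algebra_simps)
    also have "\<dots> \<le> LIN" unfolding L1 using per_i by (intro mult_left_mono sum_mono) auto
    finally show ?thesis .
  qed
  have sqL: "2 * K * s \<le> sqrt LIN"
  proof -
    have "sqrt (4 * K^2 * S) = 2 * K * s" unfolding s_def using K0
      by (simp add: real_sqrt_mult)
    then show ?thesis using LINb real_sqrt_le_mono by metis
  qed
  have sqC: "sqrt CUB \<le> s^3"
  proof -
    have "S^3 = (s^3)^2" unfolding sS[symmetric] by (simp add: power_mult[symmetric] mult.commute)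
    then have "sqrt (S^3) = sqrt ((s^3)^2)" by simp
    also have "\<dots> = s^3" using s0 by (simp only: real_sqrt_abs abs_of_nonneg zero_le_power)
    finally have "sqrt (S^3) = s^3" .
    then show ?thesis using CUBb real_sqrt_le_mono by metis
  qed
  have gnb: "gn \<ge> 2 * K * s - s^3" using tri sqL sqC by linarith
  have e0: "eps0 d 2 lam y = sqrt (K / 2)" unfolding eps0_def K_def mu_def by (simp add: field_simps)
  have SK: "S \<le> K / 2"
  proof -
    have "s \<le> sqrt (K / 2)" using hW e0 unfolding s_def S_def by simp
    then have "s^2 \<le> (sqrt (K/2))^2" using s0 by (intro power_mono) auto
    then show ?thesis using sS K0 by simp
  qed
  have "s^3 = s * S" using sS by (simp add: power3_eq_cube power2_eq_square)
  also have "\<dots> \<le> s * (K / 2)" using SK s0 by (intro mult_left_mono) auto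
  finally have h3: "s^3 \<le> s * (K / 2)" .
  have "gn \<ge> 2 * K * s - s * (K / 2)" using gnb h3 by linarith
  moreover have "2 * K * s - s * (K / 2) = 3 / 2 * K * s" by (simp add: algebra_simps)
  ultimately have "gn \<ge> 3 / 2 * K * s" by simp
  show ?thesis
  proof (cases "mu = 0")
    case True
    then have "K = 0" unfolding K_def by simp
    then have "s = 0" using SK S0 sS by simp
    have "kappa0 d 2 lam y = 0" unfolding kappa0_def using True mu_def by simp
    then show ?thesis using \<open>s = 0\<close> unfolding s_def S_def by simp
  next
    case False
    then have mp: "mu > 0" using mu0 by simp
    have "sqrt lam > 0" using hlam by simp
    have den: "sqrt lam + y 1 > 0" using \<open>sqrt lam > 0\<close> y10 by linarith
    have Kp: "K > 0" unfolding K_def using mp den \<open>sqrt lam > 0\<close>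
      by (intro divide_pos_pos mult_pos_pos) auto
    have k0: "kappa0 d 2 lam y = 2 / K" unfolding kappa0_def K_def mu_def using hlam y10 mp mu_def den
      by (simp add: field_simps)
    have "kappa0 d 2 lam y * gn \<ge> 2 / K * (3 / 2 * K * s)"
      unfolding k0 using \<open>gn \<ge> 3 / 2 * K * s\<close> Kp by (intro mult_left_mono) auto
    also have "2 / K * (3 / 2 * K * s) = 3 * s" using Kp by (simp add: field_simps)
    finally have "3 * s \<le> kappa0 d 2 lam y * gn" .
    then show ?thesis using s0 unfolding s_def S_def gn_def by linarith
  qed
qed

theorem proposition3p4:
  fixes L :: nat and d :: "nat \<Rightarrow> nat" and lam :: real and y :: "nat \<Rightarrow> real"
    and W :: "nat \<Rightarrow> nat \<Rightarrow> nat \<Rightarrow> real"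
  assumes hL: "L \<ge> 2"
    and hd: "\<forall>l\<le>L. d l > 0"
    and hlam: "lam > 0"
    and hy_mono: "\<forall>i j. 1 \<le> i \<longrightarrow> i \<le> j \<longrightarrow> j \<le> dmin d L \<longrightarrow> y j \<le> y i"
    and hy_nonneg: "\<forall>i\<in>{1..dmin d L}. y i \<ge> 0"
    and hwidth: "\<forall>l\<in>{1..L-1}. d l \<ge> dmin d L"
    and hcrit2: "L = 2 \<longrightarrow> (\<forall>i\<in>{1..rY d L y}. lam \<noteq> (y i)\<^sup>2)"
    and hcrit3: "L \<ge> 3 \<longrightarrow> (\<forall>i\<in>{1..rY d L y}. lam \<noteq> crit L (y i))"
    and hW: "sqrt (sqnormW d L W) \<le> eps0 d L lam y"
  shows "sqrt (sqnormW d L W) \<le> kappa0 d L lam y * gradnormG d L lam y W"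
proof -
  have "d 0 > 0" "d L > 0" using hd by auto
  then have "dmin d L \<ge> 1" unfolding dmin_def by simp
  then have y10: "y 1 \<ge> 0" using hy_nonneg by auto
  show ?thesis
  proof (cases "L = 2")
    case True
    then show ?thesis using main2[of lam d y W] hlam hy_mono hy_nonneg y10 hW by simp
  next
    case False
    then have "L \<ge> 3" using hL by simp
    then show ?thesis using main3[of L lam d y W] hlam hy_mono hy_nonneg y10 hW by simp
  qed
qed

end
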